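(* Let $s\geq1$ be an integer, $\alpha'>1>\alpha>0$ and $\theta_1,\theta_2>0$. If $X$ has distribution $\Gamma(\alpha',\theta_1)$ and $Y$ has distribution $\Gamma(\alpha,\theta_2)$, then $X\leq_{s\text{-IFR}}Y$, i.e. the $\Gamma(\alpha',\theta_1)$ distribution is more $s$-IFR than the $\Gamma(\alpha,\theta_2)$ distribution.
   Context: $\Gamma(\alpha,\theta)$ is the Gamma distribution with density $\frac{x^{\alpha-1}e^{-x/\theta}}{\theta^\alpha\Gamma(\alpha)}$, $x>0$. For a nonnegative random variable $X$ with density $f_X$: $\overline{T}_{X,0}=f_X$, $\widetilde{\mu}_{X,0}=1$, and for $s\geq1$, $x\geq0$, $\overline{T}_{X,s}(x)=\frac{1}{\widetilde{\mu}_{X,s-1}}\int_x^\infty \overline{T}_{X,s-1}(t)\,dt$ with $\widetilde{\mu}_{X,s}=\int_0^\infty \overline{T}_{X,s}(t)\,dt$, and $\overline{T}_{X,s}(x)=1$ for $x<0$. We write $X\leq_{s\text{-IFR}}Y$ ("$X$ is more $s$-IFR than $Y$") if $c_s(x)=\overline{T}_{Y,s}^{-1}(\overline{T}_{X,s}(x))$ is convex. *)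

theory Defs
  imports "HOL-Analysis.Analysis"
begin

definition gamma_density :: "real \<Rightarrow> real \<Rightarrow> real \<Rightarrow> real" where
  "gamma_density a th x =
     (if x > 0 then x powr (a - 1) * exp (- x / th) / (th powr a * Gamma a) else 0)"

text \<open>Iterated equilibrium tails: sTbar f s = T-bar_{X,s} for a density f;
  smu f s = mu-tilde_{X,s} (with smu f 0 = 1).\<close>
fun sTbar :: "(real \<Rightarrow> real) \<Rightarrow> nat \<Rightarrow> real \<Rightarrow> real" where
  "sTbar f 0 x = f x"
| "sTbar f (Suc s) x =
     (if x < 0 then 1
      else (LINT t:{x..}|lborel. sTbar f s t) /
           (if s = 0 then 1 else LINT t:{0..}|lborel. sTbar f s t))"

definition smu :: "(real \<Rightarrow> real) \<Rightarrow> nat \<Rightarrow> real" where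
  "smu f s = (if s = 0 then 1 else LINT t:{0..}|lborel. sTbar f s t)"

text \<open>X (density f) is more s-IFR than Y (density g): the map
  c_s(x) = T_{Y,s}^{-1}(T_{X,s}(x)) is convex on [0,\<infinity>), where the inverse is
  taken of T_{Y,s} restricted to [0,\<infinity>).\<close>
definition more_s_IFR :: "nat \<Rightarrow> (real \<Rightarrow> real) \<Rightarrow> (real \<Rightarrow> real) \<Rightarrow> bool" where
  "more_s_IFR s f g \<longleftrightarrow>
     convex_on {0..} (\<lambda>x. inv_into {0..} (sTbar g s) (sTbar f s x))"

end

theory Submission
  imports Defs "HOL-Real_Asymp.Real_Asymp" "HOL-Probability.Probability_Mass_Function"
begin

lemma convex_extend_0:
  fixes \<phi> :: "real \<Rightarrow> real"
  assumes cont: "continuous_on {0..} \<phi>" and cv: "convex_on {0<..} \<phi>"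
  shows "convex_on {0..} \<phi>"
proof (rule convex_on_linorderI)
  show "convex {0::real..}" by (rule convex_real_interval)
next
  fix t x y :: real
  assume t: "0 < t" "t < 1" and xy: "x \<in> {0..}" "y \<in> {0..}" "x < y"
  show "\<phi> ((1 - t) *\<^sub>R x + t *\<^sub>R y) \<le> (1 - t) * \<phi> x + t * \<phi> y"
  proof (cases "x > 0")
    case True
    then show ?thesis using convex_onD[OF cv, of t x y] t xy by auto
  next
    case False
    then have x0: "x = 0" using xy by auto
    have ypos: "y > 0" using xy x0 by auto
    have ev: "\<forall>\<^sub>F e in at_right 0. \<phi> ((1 - t) * e + t * y) \<le> (1 - t) * \<phi> e + t * \<phi> y"
    proof -
      have "\<forall>\<^sub>F e in at_right (0::real). e > 0" by (simp add: eventually_at_right_less)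
      then show ?thesis
      proof eventually_elim
        case (elim e)
        then show ?case using convex_onD[OF cv, of t e y] t ypos by auto
      qed
    qed
    have c0: "(\<phi> \<longlongrightarrow> \<phi> 0) (at_right 0)"
    proof -
      have "(\<phi> \<longlongrightarrow> \<phi> 0) (at 0 within {0..})"
        using cont by (simp add: continuous_on_def)
      moreover have "at_right (0::real) \<le> at 0 within {0..}"
        by (rule at_le) auto
      ultimately show ?thesis using tendsto_mono by blast
    qed
    have "isCont \<phi> (t * y)"
    proof -
      have "t * y \<in> {0<..}" using t ypos by simp
      then have "t * y \<in> interior {0..}" by simp
      then show ?thesis using cont continuous_on_interior by blast
    qed
    moreover have "((\<lambda>e. (1 - t) * e + t * y) \<longlongrightarrow> (1 - t) * 0 + t * y) (at_right 0)"
      by (intro tendsto_intros)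
    ultimately have l1: "((\<lambda>e. \<phi> ((1 - t) * e + t * y)) \<longlongrightarrow> \<phi> (t * y)) (at_right 0)"
      using isCont_tendsto_compose by fastforce
    have l2: "((\<lambda>e. (1 - t) * \<phi> e + t * \<phi> y) \<longlongrightarrow> (1 - t) * \<phi> 0 + t * \<phi> y) (at_right 0)"
      by (intro tendsto_intros c0)
    have "\<phi> (t * y) \<le> (1 - t) * \<phi> 0 + t * \<phi> y"
      by (rule tendsto_le[OF _ l2 l1 ev]) simp
    then show ?thesis using x0 by simp
  qed
qed

lemma concave_extend_0:
  fixes \<phi> :: "real \<Rightarrow> real"
  assumes cont: "continuous_on {0..} \<phi>" and cv: "concave_on {0<..} \<phi>"
  shows "concave_on {0..} \<phi>"
  using convex_extend_0[of "\<lambda>x. - \<phi> x"] assms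
  by (simp add: concave_on_def continuous_on_minus)

lemma final_convex:
  fixes TX TY :: "real \<Rightarrow> real"
  assumes TXpos: "\<And>x. x \<ge> 0 \<Longrightarrow> 0 < TX x" and TXle: "\<And>x. x \<ge> 0 \<Longrightarrow> TX x \<le> 1"
    and TXc: "concave_on {0..} (\<lambda>x. ln (TX x))"
    and TYcont: "continuous_on {0..} TY" and TY0: "TY 0 = 1"
    and TYdec: "\<And>x y. 0 \<le> x \<Longrightarrow> x < y \<Longrightarrow> TY y < TY x"
    and TYlim: "(TY \<longlongrightarrow> 0) at_top"
    and TYpos: "\<And>x. x \<ge> 0 \<Longrightarrow> 0 < TY x"
    and TYc: "convex_on {0..} (\<lambda>x. ln (TY x))"
  shows "convex_on {0..} (\<lambda>x. inv_into {0..} TY (TX x))"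
proof -
  have inj: "inj_on TY {0..}"
  proof (rule inj_onI)
    fix x y :: real assume "x \<in> {0..}" "y \<in> {0..}" "TY x = TY y"
    then show "x = y" using TYdec[of x y] TYdec[of y x] by (cases x y rule: linorder_cases) auto
  qed
  have surj: "TX x \<in> TY ` {0..}" if x: "x \<ge> 0" for x
  proof -
    have v: "0 < TX x" "TX x \<le> 1" using TXpos TXle x by auto
    have "\<forall>\<^sub>F z in at_top. TY z < TX x"
      using order_tendstoD(2)[OF TYlim v(1)] .
    then obtain b where b: "\<And>z. z \<ge> b \<Longrightarrow> TY z < TX x"
      by (auto simp: eventually_at_top_linorder)
    define b' where "b' = max b 0"
    have "TY b' \<le> TX x" using b[of b'] by (simp add: b'_def)
    moreover have "TX x \<le> TY 0" using v TY0 by simp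
    moreover have "continuous_on {0..b'} TY"
      using TYcont by (rule continuous_on_subset) auto
    ultimately obtain y where "0 \<le> y" "y \<le> b'" "TY y = TX x"
      using IVT2'[of TY b' "TX x" 0] b'_def by auto
    then show ?thesis by force
  qed
  define c where "c x = inv_into {0..} TY (TX x)" for x
  have c1: "c x \<ge> 0" and c2: "TY (c x) = TX x" if "x \<ge> 0" for x
    using surj[OF that] inv_into_into[OF surj[OF that]] f_inv_into_f[OF surj[OF that]]
    unfolding c_def by auto
  have "convex_on {0..} c"
  proof (rule convex_onI)
    show "convex {0::real..}" by (rule convex_real_interval)
  next
    fix t x y :: real
    assume t: "0 < t" "t < 1" and xy: "x \<in> {0..}" "y \<in> {0..}"
    define z where "z = (1 - t) * x + t * y"
    define w where "w = (1 - t) * c x + t * c y"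
    have x0: "x \<ge> 0" and y0: "y \<ge> 0" using xy by auto
    have z0: "z \<ge> 0" using t x0 y0 unfolding z_def by simp
    have w0: "w \<ge> 0" using t c1[OF x0] c1[OF y0] unfolding w_def by simp
    have "ln (TY (c z)) = ln (TX z)" using c2[OF z0] by simp
    also have "\<dots> \<ge> (1 - t) * ln (TX x) + t * ln (TX y)"
      using concave_onD[OF TXc, of t x y] t xy unfolding z_def by auto
    finally have 1: "ln (TY (c z)) \<ge> (1 - t) * ln (TY (c x)) + t * ln (TY (c y))"
      using c2[OF x0] c2[OF y0] by simp
    have 2: "ln (TY w) \<le> (1 - t) * ln (TY (c x)) + t * ln (TY (c y))"
      using convex_onD[OF TYc, of t "c x" "c y"] t c1[OF x0] c1[OF y0] unfolding w_def by auto
    have "ln (TY w) \<le> ln (TY (c z))" using 1 2 by linarith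
    then have "TY w \<le> TY (c z)" using TYpos[OF w0] TYpos[OF c1[OF z0]] by simp
    then have "c z \<le> w" using TYdec[OF w0, of "c z"] by force
    then show "c ((1 - t) *\<^sub>R x + t *\<^sub>R y) \<le> (1 - t) * c x + t * c y"
      unfolding z_def w_def by simp
  qed
  then show ?thesis unfolding c_def .
qed

lemma has_integral_to_lborel:
  fixes f :: "real \<Rightarrow> real"
  assumes meas: "f \<in> borel_measurable borel" and S: "S \<in> sets borel"
    and nn: "\<And>x. x \<in> S \<Longrightarrow> 0 \<le> f x" and hi: "(f has_integral I) S"
  shows "set_integrable lborel S f" "(LINT x:S|lborel. f x) = I"
proof -
  have "f integrable_on S" using hi by blast
  then have "f absolutely_integrable_on S" using nn by (rule nonnegative_absolutely_integrable_1)
  then have "integrable lebesgue (\<lambda>x. indicator S x *\<^sub>R f x)" by (simp add: set_integrable_def)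
  moreover have "(\<lambda>x. indicator S x *\<^sub>R f x) \<in> borel_measurable lborel"
    using meas S by measurable
  ultimately have "integrable lborel (\<lambda>x. indicator S x *\<^sub>R f x)"
    using integrable_completion by blast
  then show si: "set_integrable lborel S f" by (simp add: set_integrable_def)
  show "(LINT x:S|lborel. f x) = I"
    using set_borel_integral_eq_integral(2)[OF si] hi by (simp add: integral_unique)
qed

lemma exp_tail_integral:
  fixes \<beta> c :: real
  assumes "\<beta> > 0"
  shows "set_integrable lborel {c..} (\<lambda>t. exp (- \<beta> * t))"
    "(LINT t:{c..}|lborel. exp (- \<beta> * t)) = exp (- \<beta> * c) / \<beta>"
  using has_integral_to_lborel[of "\<lambda>t. exp (- \<beta> * t)" "{c..}", OF _ _ _ has_integral_exp_minus_to_infinity[OF assms]]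
  by auto

lemma set_integral_shift:
  fixes g :: "real \<Rightarrow> real"
  assumes "set_integrable lborel {y..} g"
  shows "set_integrable lborel {0..} (\<lambda>u. g (y + u))"
    "(LINT t:{y..}|lborel. g t) = (LINT u:{0..}|lborel. g (y + u))"
proof -
  have eq: "(\<lambda>u. indicator {y..} (y + 1 * u) *\<^sub>R g (y + 1 * u)) = (\<lambda>u. indicator {0..} u *\<^sub>R g (y + u))"
    by (auto simp: indicator_def)
  have "integrable lborel (\<lambda>t. indicator {y..} t *\<^sub>R g t)"
    using assms by (simp add: set_integrable_def)
  from lborel_integrable_real_affine[OF this, of 1 y]
  show "set_integrable lborel {0..} (\<lambda>u. g (y + u))"
    unfolding set_integrable_def eq by simp
  show "(LINT t:{y..}|lborel. g t) = (LINT u:{0..}|lborel. g (y + u))"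
    unfolding set_lebesgue_integral_def
    using lborel_integral_real_affine[of 1 "\<lambda>t. indicator {y..} t *\<^sub>R g t" y] eq by simp
qed

lemma tail_split:
  fixes g :: "real \<Rightarrow> real"
  assumes int: "set_integrable lborel {0..} g" and x: "x \<ge> 0"
  shows "(LINT t:{x..}|lborel. g t) = (LINT t:{0..}|lborel. g t) - (LINT t:{0..x}|lborel. g t)"
proof -
  have i1: "set_integrable lborel {0..x} g" by (rule set_integrable_subset[OF int]) auto
  have i2: "set_integrable lborel {x<..} g" by (rule set_integrable_subset[OF int]) (use x in auto)
  have i3: "set_integrable lborel {x..} g" by (rule set_integrable_subset[OF int]) (use x in auto)
  have "{0..} = {0..x} \<union> {x<..}" using x by auto
  then have "(LINT t:{0..}|lborel. g t) = (LINT t:{0..x}|lborel. g t) + (LINT t:{x<..}|lborel. g t)"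
    using set_integral_Un[OF _ i1 i2] by (metis (no_types, lifting) disjoint_iff greaterThan_iff atLeastAtMost_iff not_less)
  moreover have "(LINT t:{x..}|lborel. g t) = (LINT t:{x<..}|lborel. g t)"
  proof (rule set_integral_cong_set)
    show "set_borel_measurable lborel {x<..} g" using i2 unfolding set_borel_measurable_def set_integrable_def by (rule borel_measurable_integrable)
    show "set_borel_measurable lborel {x..} g" using i3 unfolding set_borel_measurable_def set_integrable_def by (rule borel_measurable_integrable)
    show "AE t in lborel. (t \<in> {x<..}) = (t \<in> {x..})"
      using AE_lborel_singleton[of x] by eventually_elim auto
  qed
  ultimately show ?thesis by simp
qed

definition basic :: "(real \<Rightarrow> real) \<Rightarrow> bool" where
  "basic g \<longleftrightarrow> g \<in> borel_measurable borel \<and> (\<forall>t. 0 \<le> g t) \<and> (\<forall>t>0. 0 < g t)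
     \<and> continuous_on {0<..} g \<and> set_integrable lborel {0..} g
     \<and> (\<exists>C \<beta>. 0 < \<beta> \<and> (\<forall>t\<ge>1. g t \<le> C * exp (- \<beta> * t)))"

definition nextT :: "(real \<Rightarrow> real) \<Rightarrow> real \<Rightarrow> real" where
  "nextT g = (\<lambda>x. if x < 0 then 1 else (LINT t:{x..}|lborel. g t) / (LINT t:{0..}|lborel. g t))"

lemma set_integral_nonneg':
  fixes g :: "real \<Rightarrow> real"
  assumes "\<And>t. 0 \<le> g t"
  shows "0 \<le> (LINT t:A|lborel. g t)"
  unfolding set_lebesgue_integral_def using assms
  by (intro integral_nonneg_AE AE_I2) (auto simp: indicator_def)

lemma level_basic:
  assumes b: "basic g"
  defines "T \<equiv> nextT g"
  defines "\<mu> \<equiv> LINT t:{0..}|lborel. g t"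
  shows "basic T" "continuous_on {0..} T" "T 0 = 1"
    "\<And>x y. 0 \<le> x \<Longrightarrow> x < y \<Longrightarrow> T y < T x"
    "(T \<longlongrightarrow> 0) at_top" "\<And>x. 0 < T x" "\<And>x. T x \<le> 1"
    "\<mu> > 0"
    "\<And>x. x > 0 \<Longrightarrow> (T has_real_derivative - g x / \<mu>) (at x)"
    "\<And>x. x \<ge> 0 \<Longrightarrow> T x = (LINT t:{x..}|lborel. g t) / \<mu>"
proof -
  have meas: "g \<in> borel_measurable borel" and nn: "\<And>t. 0 \<le> g t" and pos: "\<And>t. t > 0 \<Longrightarrow> 0 < g t"
    and cont: "continuous_on {0<..} g" and int: "set_integrable lborel {0..} g"
    using b unfolding basic_def by auto
  obtain C \<beta> where \<beta>: "0 < \<beta>" and Cb: "\<And>t. t \<ge> 1 \<Longrightarrow> g t \<le> C * exp (- \<beta> * t)"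
    using b unfolding basic_def by auto
  define G where "G x = (LINT t:{x..}|lborel. g t)" for x
  define F where "F x = (LINT t:{0..x}|lborel. g t)" for x
  have \<mu>G: "\<mu> = G 0" unfolding G_def \<mu>_def by simp
  have Gsplit: "G x = \<mu> - F x" if "x \<ge> 0" for x
    unfolding G_def F_def \<mu>_def using tail_split[OF int that] .
  have intab: "set_integrable lborel {0..b} g" for b
    by (rule set_integrable_subset[OF int]) auto
  have intx: "set_integrable lborel {x..} g" if "x \<ge> 0" for x
    by (rule set_integrable_subset[OF int]) (use that in auto)
  have Fcont: "continuous_on UNIV F"
    unfolding F_def by (rule continuous_on_LBINT) (rule intab)
  have FH: "F = (\<lambda>u. integral {0..u} g)"
  proof
    fix u show "F u = integral {0..u} g"
      unfolding F_def using set_borel_integral_eq_integral(2)[OF intab[of u]] .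
  qed
  have Fder: "(F has_real_derivative g x) (at x)" if x: "x > 0" for x
  proof -
    have gi: "g integrable_on {0..x+1}" using set_borel_integral_eq_integral(1)[OF intab] .
    have ic: "isCont g x"
      using cont x by (metis continuous_on_eq_continuous_at open_greaterThan greaterThan_iff)
    have "((\<lambda>u. integral {0..u} g) has_vector_derivative g x) (at x within ({0..x+1} - {}))"
      by (rule integral_has_vector_derivative_continuous_at[OF gi])
         (use x ic in \<open>auto simp: continuous_at_imp_continuous_within\<close>)
    moreover have "at x within ({0..x+1} - {}) = at x"
      using x by (intro at_within_interior) auto
    ultimately show ?thesis
      by (simp add: FH has_real_derivative_iff_has_vector_derivative)
  qed
  have Gnn: "G x \<ge> 0" for x unfolding G_def by (rule set_integral_nonneg') (rule nn)
  have Gbnd: "G x \<le> C * (exp (- \<beta> * x) / \<beta>)" if x: "x \<ge> 1" for x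
  proof -
    have e: "set_integrable lborel {x..} (\<lambda>t. C * exp (- \<beta> * t))"
      by (rule set_integrable_mult_right) (rule exp_tail_integral(1)[OF \<beta>])
    have "G x \<le> (LINT t:{x..}|lborel. C * exp (- \<beta> * t))"
      unfolding G_def by (rule set_integral_mono[OF intx e]) (use x Cb in auto)
    also have "\<dots> = C * (exp (- \<beta> * x) / \<beta>)"
      using exp_tail_integral(2)[OF \<beta>, of x] by simp
    finally show ?thesis .
  qed
  have Finc: "F x < F y" if "0 \<le> x" "x < y" for x y
  proof (rule DERIV_pos_imp_increasing_open[OF that(2)])
    fix z assume "x < z" "z < y"
    then show "\<exists>d. DERIV F z :> d \<and> d > 0" using that Fder pos by (intro exI[of _ "g z"]) auto
  next
    show "continuous_on {x..y} F" using Fcont by (rule continuous_on_subset) auto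
  qed
  have Gdec: "G y < G x" if "0 \<le> x" "x < y" for x y
    using Finc[OF that] Gsplit[of x] Gsplit[of y] that by simp
  have Gpos: "G x > 0" if "x \<ge> 0" for x
    using Gdec[of x "x+1"] Gnn[of "x+1"] that by simp
  show \<mu>pos: "\<mu> > 0" using Gpos[of 0] \<mu>G by simp
  have Tx: "T x = G x / \<mu>" if "x \<ge> 0" for x
    using that unfolding T_def nextT_def G_def \<mu>_def by simp
  then show "\<And>x. x \<ge> 0 \<Longrightarrow> T x = (LINT t:{x..}|lborel. g t) / \<mu>" unfolding G_def by simp
  show Tpos: "\<And>x. 0 < T x"
  proof -
    fix x show "0 < T x"
      by (cases "x < 0") (use Tx Gpos \<mu>pos in \<open>auto simp: T_def nextT_def\<close>)
  qed
  show T0: "T 0 = 1" using Tx[of 0] \<mu>G \<mu>pos by simp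
  show Tdec: "\<And>x y. 0 \<le> x \<Longrightarrow> x < y \<Longrightarrow> T y < T x"
    using Tx Gdec \<mu>pos by (simp add: divide_strict_right_mono)
  show Tle1: "\<And>x. T x \<le> 1"
  proof -
    fix x show "T x \<le> 1"
    proof (cases "x < 0")
      case True then show ?thesis by (simp add: T_def nextT_def)
    next
      case False
      then show ?thesis using Tdec[of 0 x] T0 by (cases "x = 0") auto
    qed
  qed
  have Tcont: "continuous_on {0..} T"
  proof -
    have "continuous_on {0..} (\<lambda>x. (\<mu> - F x) / \<mu>)"
      by (intro continuous_intros continuous_on_subset[OF Fcont]) (use \<mu>pos in auto)
    then show ?thesis
      by (rule continuous_on_cong[THEN iffD1, rotated -1]) (auto simp: Tx Gsplit)
  qed
  then show "continuous_on {0..} T" .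
  show "(T \<longlongrightarrow> 0) at_top"
  proof (rule tendsto_sandwich[of "\<lambda>_. 0" _ _ "\<lambda>x. C / (\<beta> * \<mu>) * exp (- \<beta> * x)"])
    show "\<forall>\<^sub>F n in at_top. 0 \<le> T n" using Tpos by (simp add: less_imp_le)
    have "\<forall>\<^sub>F n in at_top. n \<ge> (1::real)" by (rule eventually_ge_at_top)
    then show "\<forall>\<^sub>F n in at_top. T n \<le> C / (\<beta> * \<mu>) * exp (- \<beta> * n)"
    proof eventually_elim
      case (elim n)
      then have "T n = G n / \<mu>" using Tx by simp
      also have "\<dots> \<le> C * (exp (- \<beta> * n) / \<beta>) / \<mu>"
        using Gbnd[OF elim] \<mu>pos by (intro divide_right_mono) auto
      also have "\<dots> = C / (\<beta> * \<mu>) * exp (- \<beta> * n)" using \<mu>pos \<beta> by (simp add: field_simps)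
      finally show ?case .
    qed
    show "((\<lambda>x. C / (\<beta> * \<mu>) * exp (- \<beta> * x)) \<longlongrightarrow> 0) at_top"
      using \<beta> by real_asymp
  qed simp
  show "\<And>x. x > 0 \<Longrightarrow> (T has_real_derivative - g x / \<mu>) (at x)"
  proof -
    fix x :: real assume x: "x > 0"
    have "((\<lambda>u. (\<mu> - F u) / \<mu>) has_real_derivative (0 - g x) / \<mu>) (at x)"
      by (intro DERIV_cdivide DERIV_diff DERIV_const Fder x)
    then have "((\<lambda>u. (\<mu> - F u) / \<mu>) has_real_derivative - g x / \<mu>) (at x)" by simp
    then show "(T has_real_derivative - g x / \<mu>) (at x)"
      by (rule has_field_derivative_transform_within_open[of _ _ _ "{0<..}"])
         (use x in \<open>auto simp: Tx Gsplit\<close>)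
  qed
  have Tmono: "mono (\<lambda>x. - T x)"
  proof (rule monoI)
    fix x y :: real assume "x \<le> y"
    then show "- T x \<le> - T y"
      using Tdec[of x y] Tle1[of y] by (cases "x < 0"; cases "x = y") (auto simp: T_def nextT_def)
  qed
  have Tmeas: "T \<in> borel_measurable borel"
  proof -
    have "(\<lambda>x. - (- T x)) \<in> borel_measurable borel"
      using borel_measurable_mono[OF Tmono] by (rule borel_measurable_uminus)
    then show ?thesis by simp
  qed
  define K where "K = max (exp \<beta>) (C / (\<beta> * \<mu>))"
  have Tbnd1: "T t \<le> C / (\<beta> * \<mu>) * exp (- \<beta> * t)" if "t \<ge> 1" for t
  proof -
    have "T t = G t / \<mu>" using Tx that by simp
    also have "\<dots> \<le> C * (exp (- \<beta> * t) / \<beta>) / \<mu>"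
      using Gbnd[OF that] \<mu>pos by (intro divide_right_mono) auto
    also have "\<dots> = C / (\<beta> * \<mu>) * exp (- \<beta> * t)" using \<mu>pos \<beta> by (simp add: field_simps)
    finally show ?thesis .
  qed
  have TK: "T t \<le> K * exp (- \<beta> * t)" if "t \<ge> 0" for t
  proof (cases "t \<ge> 1")
    case True
    then show ?thesis using Tbnd1[OF True] unfolding K_def
      by (smt (verit, best) exp_gt_zero mult_right_mono)
  next
    case False
    have "exp \<beta> * exp (- \<beta>) \<le> exp \<beta> * exp (- \<beta> * t)"
      using False \<beta> that by (simp add: mult_left_mono)
    moreover have "exp \<beta> * exp (- \<beta>) = 1" by (simp add: exp_minus)
    moreover have "exp \<beta> * exp (- \<beta> * t) \<le> K * exp (- \<beta> * t)" unfolding K_def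
      by (intro mult_right_mono) auto
    ultimately show ?thesis using Tle1[of t] by linarith
  qed
  have Kpos: "K > 0" unfolding K_def by (simp add: less_max_iff_disj)
  have Tint: "set_integrable lborel {0..} T"
  proof (rule set_integrable_bound[where f="\<lambda>t. K * exp (- \<beta> * t)"])
    show "set_integrable lborel {0..} (\<lambda>t. K * exp (- \<beta> * t))"
      using exp_tail_integral(1)[OF \<beta>, of 0] Kpos by auto
    show "set_borel_measurable lborel {0..} T"
      unfolding set_borel_measurable_def using Tmeas by measurable
    show "AE x in lborel. x \<in> {0..} \<longrightarrow> norm (T x) \<le> norm (K * exp (- \<beta> * x))"
      using TK Tpos Kpos by (intro AE_I2) (auto simp: abs_of_pos less_imp_le)
  qed
  show "basic T" unfolding basic_def
  proof (intro conjI allI impI)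
    show "T \<in> borel_measurable borel" by (rule Tmeas)
    show "0 \<le> T t" for t using Tpos[of t] by simp
    show "0 < T t" for t by (rule Tpos)
    show "continuous_on {0<..} T" using Tcont by (rule continuous_on_subset) auto
    show "set_integrable lborel {0..} T" by (rule Tint)
    show "\<exists>C \<beta>. 0 < \<beta> \<and> (\<forall>t\<ge>1. T t \<le> C * exp (- \<beta> * t))"
      using Tbnd1 \<beta> by blast
  qed
qed

definition ratioI :: "(real \<Rightarrow> real) \<Rightarrow> bool" where
  "ratioI g \<longleftrightarrow> (\<forall>x y u. 0 < x \<longrightarrow> x \<le> y \<longrightarrow> 0 \<le> u \<longrightarrow> g x * g (y + u) \<le> g y * g (x + u))"

definition ratioD :: "(real \<Rightarrow> real) \<Rightarrow> bool" where
  "ratioD g \<longleftrightarrow> (\<forall>x y u. 0 < x \<longrightarrow> x \<le> y \<longrightarrow> 0 \<le> u \<longrightarrow> g y * g (x + u) \<le> g x * g (y + u))"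

lemma concave_ratio:
  fixes \<phi> :: "real \<Rightarrow> real"
  assumes cv: "concave_on {0..} \<phi>" and x: "0 \<le> x" and xy: "x \<le> y" and u: "0 \<le> u"
  shows "\<phi> x + \<phi> (y + u) \<le> \<phi> y + \<phi> (x + u)"
proof (cases "u = 0 \<or> x = y")
  case True then show ?thesis by auto
next
  case False
  then have u0: "u > 0" and xy': "x < y" using u xy by auto
  define L where "L = y + u - x"
  have L: "L > 0" using u0 xy' unfolding L_def by simp
  define l where "l = (y - x) / L"
  have l0: "0 \<le> l" "l \<le> 1" using L xy' u0 unfolding l_def L_def by (auto simp: field_simps)
  have lL: "l * L = y - x" using L by (simp add: l_def)
  have e1: "(1 - l) *\<^sub>R x + l *\<^sub>R (y + u) = y"
  proof -
    have "(1 - l) *\<^sub>R x + l *\<^sub>R (y + u) = x + l * L" by (simp add: L_def algebra_simps)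
    then show ?thesis using lL by simp
  qed
  have e2: "(1 - (1 - l)) *\<^sub>R x + (1 - l) *\<^sub>R (y + u) = x + u"
  proof -
    have "(1 - (1 - l)) *\<^sub>R x + (1 - l) *\<^sub>R (y + u) = y + u - l * L" by (simp add: L_def algebra_simps)
    then show ?thesis using lL by simp
  qed
  have "\<phi> y \<ge> (1 - l) * \<phi> x + l * \<phi> (y + u)"
    using concave_onD[OF cv, of l x "y + u"] l0 x xy u e1 by auto
  moreover have "\<phi> (x + u) \<ge> (1 - (1 - l)) * \<phi> x + (1 - l) * \<phi> (y + u)"
    using concave_onD[OF cv, of "1 - l" x "y + u"] l0 x xy u e2 by auto
  ultimately show ?thesis by (simp add: algebra_simps)
qed

lemma convex_ratio:
  fixes \<phi> :: "real \<Rightarrow> real"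
  assumes cv: "convex_on {0..} \<phi>" and x: "0 \<le> x" and xy: "x \<le> y" and u: "0 \<le> u"
  shows "\<phi> y + \<phi> (x + u) \<le> \<phi> x + \<phi> (y + u)"
  using concave_ratio[of "\<lambda>x. - \<phi> x" x y u] assms by (simp add: concave_on_def)

lemma hazard_aux:
  assumes b: "basic g" and x: "0 < x" and that: "y \<ge> 0"
  shows "g x * (LINT t:{y..}|lborel. g t) = (LINT u:{0..}|lborel. g x * g (y + u))"
    "set_integrable lborel {0..} (\<lambda>u. g x * g (y + u))"
proof -
  have int: "set_integrable lborel {0..} g" using b unfolding basic_def by auto
  have iy: "set_integrable lborel {y..} g" by (rule set_integrable_subset[OF int]) (use that in auto)
  show "g x * (LINT t:{y..}|lborel. g t) = (LINT u:{0..}|lborel. g x * g (y + u))"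
    using set_integral_shift(2)[OF iy] by simp
  show "set_integrable lborel {0..} (\<lambda>u. g x * g (y + u))"
    using set_integral_shift(1)[OF iy] by (rule set_integrable_mult_right)
qed

lemma level_log:
  assumes b: "basic g"
  defines "T \<equiv> nextT g"
  defines "G \<equiv> (\<lambda>x. LINT t:{x..}|lborel. g t)"
  shows "\<And>x. x > 0 \<Longrightarrow> ((\<lambda>x. - ln (T x)) has_real_derivative g x / G x) (at x)"
    "continuous_on {0..} (\<lambda>x. ln (T x))"
    "\<And>x. x \<ge> 0 \<Longrightarrow> G x > 0"
proof -
  note L = level_basic[OF b]
  define \<mu> where "\<mu> = (LINT t:{0..}|lborel. g t)"
  have \<mu>: "\<mu> > 0" using L(8) unfolding \<mu>_def .
  have Tx: "T x = G x / \<mu>" if "x \<ge> 0" for x using L(10)[OF that] unfolding T_def G_def \<mu>_def .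
  show Gpos: "G x > 0" if "x \<ge> 0" for x using L(6)[of x] Tx[OF that] \<mu> unfolding T_def
    by (simp add: zero_less_divide_iff)
  have ne: "\<forall>x. nextT g x \<noteq> 0" using L(6) by (metis less_irrefl)
  show "continuous_on {0..} (\<lambda>x. ln (T x))"
    using L(2) ne unfolding T_def by (intro continuous_intros) auto
  fix x :: real assume x: "x > 0"
  have "((\<lambda>x. ln (T x)) has_real_derivative (1 / T x) * (- g x / \<mu>)) (at x)"
    by (rule DERIV_chain2[OF DERIV_ln_divide]) (use L(6) L(9)[OF x] in \<open>auto simp: T_def \<mu>_def\<close>)
  then have "((\<lambda>x. - ln (T x)) has_real_derivative - ((1 / T x) * (- g x / \<mu>))) (at x)"
    by (rule DERIV_minus)
  moreover have "- ((1 / T x) * (- g x / \<mu>)) = g x / G x"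
    using Tx[of x] x \<mu> Gpos[of x] by (simp add: field_simps)
  ultimately show "((\<lambda>x. - ln (T x)) has_real_derivative g x / G x) (at x)" by metis
qed

lemma level_IFR:
  assumes b: "basic g" and r: "ratioI g"
  shows "concave_on {0..} (\<lambda>x. ln (nextT g x))" "ratioI (nextT g)"
proof -
  define G where "G = (\<lambda>x. LINT t:{x..}|lborel. g t)"
  note LL = level_log[OF b, folded G_def]
  have nn: "\<And>t. 0 \<le> g t" using b unfolding basic_def by auto
  have haz: "g x / G x \<le> g y / G y" if x: "0 < x" and xy: "x \<le> y" for x y
  proof -
    have "g x * G y = (LINT u:{0..}|lborel. g x * g (y + u))"
      using hazard_aux(1)[OF b x, of y] x xy unfolding G_def by (metis less_le_trans order_less_imp_le)
    also have "\<dots> \<le> (LINT u:{0..}|lborel. g y * g (x + u))"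
    proof (rule set_integral_mono)
      show "set_integrable lborel {0..} (\<lambda>u. g x * g (y + u))"
        using hazard_aux(2)[OF b x, of y] x xy by simp
      show "set_integrable lborel {0..} (\<lambda>u. g y * g (x + u))"
        using hazard_aux(2)[OF b, of y x] x xy by simp
      show "g x * g (y + u) \<le> g y * g (x + u)" if "u \<in> {0..}" for u
        using r x xy that unfolding ratioI_def by auto
    qed
    also have "\<dots> = g y * G x"
      using hazard_aux(1)[OF b, of y x] x xy unfolding G_def by (metis less_le_trans order_less_imp_le)
    finally have "g x * G y \<le> g y * G x" .
    moreover have "G x > 0" "G y > 0" using LL(3)[of x] LL(3)[of y] x xy unfolding G_def by auto
    ultimately show ?thesis by (simp add: divide_simps algebra_simps)
  qed
  have "convex_on {0<..} (\<lambda>x. - ln (nextT g x))"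
    by (rule convex_on_realI[where f'="\<lambda>x. g x / G x"]) (use LL(1) haz in \<open>auto simp: G_def\<close>)
  then have "concave_on {0<..} (\<lambda>x. ln (nextT g x))" by (simp add: concave_on_def)
  then show cc: "concave_on {0..} (\<lambda>x. ln (nextT g x))"
    by (rule concave_extend_0[OF LL(2)])
  have pos: "\<And>x. 0 < nextT g x" using level_basic(6)[OF b] .
  have ne: "\<And>x. nextT g x \<noteq> 0" using pos by (metis less_irrefl)
  show "ratioI (nextT g)" unfolding ratioI_def
  proof (intro allI impI)
    fix x y u :: real assume "0 < x" "x \<le> y" "0 \<le> u"
    then have "ln (nextT g x) + ln (nextT g (y + u)) \<le> ln (nextT g y) + ln (nextT g (x + u))"
      using concave_ratio[OF cc, of x y u] by auto
    then have "ln (nextT g x * nextT g (y + u)) \<le> ln (nextT g y * nextT g (x + u))"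
      using ne by (simp add: ln_mult)
    then show "nextT g x * nextT g (y + u) \<le> nextT g y * nextT g (x + u)"
      using pos by (simp add: mult_pos_pos)
  qed
qed

lemma level_DFR:
  assumes b: "basic g" and r: "ratioD g"
  shows "convex_on {0..} (\<lambda>x. ln (nextT g x))" "ratioD (nextT g)"
proof -
  define G where "G = (\<lambda>x. LINT t:{x..}|lborel. g t)"
  note LL = level_log[OF b, folded G_def]
  have haz: "g y / G y \<le> g x / G x" if x: "0 < x" and xy: "x \<le> y" for x y
  proof -
    have "g y * G x = (LINT u:{0..}|lborel. g y * g (x + u))"
      using hazard_aux(1)[OF b, of y x] x xy unfolding G_def by (metis less_le_trans order_less_imp_le)
    also have "\<dots> \<le> (LINT u:{0..}|lborel. g x * g (y + u))"
    proof (rule set_integral_mono)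
      show "set_integrable lborel {0..} (\<lambda>u. g x * g (y + u))"
        using hazard_aux(2)[OF b x, of y] x xy by simp
      show "set_integrable lborel {0..} (\<lambda>u. g y * g (x + u))"
        using hazard_aux(2)[OF b, of y x] x xy by simp
      show "g y * g (x + u) \<le> g x * g (y + u)" if "u \<in> {0..}" for u
        using r x xy that unfolding ratioD_def by auto
    qed
    also have "\<dots> = g x * G y"
      using hazard_aux(1)[OF b x, of y] x xy unfolding G_def by (metis less_le_trans order_less_imp_le)
    finally have "g y * G x \<le> g x * G y" .
    moreover have "G x > 0" "G y > 0" using LL(3)[of x] LL(3)[of y] x xy unfolding G_def by auto
    ultimately show ?thesis by (simp add: divide_simps algebra_simps)
  qed
  have d: "\<And>x. x > 0 \<Longrightarrow> ((\<lambda>x. ln (nextT g x)) has_real_derivative - (g x / G x)) (at x)"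
    using DERIV_minus[OF LL(1)] by (simp add: G_def)
  have "convex_on {0<..} (\<lambda>x. ln (nextT g x))"
    by (rule convex_on_realI[where f'="\<lambda>x. - (g x / G x)"]) (use d haz in auto)
  then show cc: "convex_on {0..} (\<lambda>x. ln (nextT g x))"
    by (rule convex_extend_0[OF LL(2)])
  have pos: "\<And>x. 0 < nextT g x" using level_basic(6)[OF b] .
  have ne: "\<And>x. nextT g x \<noteq> 0" using pos by (metis less_irrefl)
  show "ratioD (nextT g)" unfolding ratioD_def
  proof (intro allI impI)
    fix x y u :: real assume "0 < x" "x \<le> y" "0 \<le> u"
    then have "ln (nextT g y) + ln (nextT g (x + u)) \<le> ln (nextT g x) + ln (nextT g (y + u))"
      using convex_ratio[OF cc, of x y u] by auto
    then have "ln (nextT g y * nextT g (x + u)) \<le> ln (nextT g x * nextT g (y + u))"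
      using ne by (simp add: ln_mult)
    then show "nextT g y * nextT g (x + u) \<le> nextT g x * nextT g (y + u)"
      using pos by (simp add: mult_pos_pos)
  qed
qed

lemma gamma_density_pos_form:
  assumes "x > 0"
  shows "gamma_density a th x = x powr (a - 1) * exp (- x / th) / (th powr a * Gamma a)"
  using assms by (simp add: gamma_density_def)

lemma gamma_meas: "gamma_density a th \<in> borel_measurable borel"
  unfolding gamma_density_def by measurable

lemma gamma_nn:
  assumes "a > 0" "th > 0" shows "0 \<le> gamma_density a th t"
  using assms by (simp add: gamma_density_def)

lemma gamma_pos:
  assumes "a > 0" "th > 0" "t > 0" shows "0 < gamma_density a th t"
  using assms by (simp add: gamma_density_def)

lemma gamma_cont:
  assumes "a > 0" "th > 0" shows "continuous_on {0<..} (gamma_density a th)"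
proof -
  have "continuous_on {0<..} (\<lambda>x. x powr (a - 1) * exp (- x / th) / (th powr a * Gamma a))"
    using assms Gamma_real_pos[OF assms(1)] by (intro continuous_intros) (auto simp del: Gamma_real_pos)
  then show ?thesis
    by (rule continuous_on_cong[THEN iffD1, rotated -1]) (auto simp: gamma_density_def)
qed

lemma gamma_integral:
  assumes a: "a > 0" and th: "th > 0"
  shows "set_integrable lborel {0..} (gamma_density a th)"
    "(LINT t:{0..}|lborel. gamma_density a th t) = 1"
proof -
  define k where "k x = indicator {0..} x *\<^sub>R (x powr (a - 1) / exp x)" for x :: real
  have hk: "set_integrable lborel {0..} (\<lambda>x. x powr (a - 1) / exp x)"
    "(LINT x:{0..}|lborel. x powr (a - 1) / exp x) = Gamma a"
    using has_integral_to_lborel[OF _ _ _ Gamma_integral_real[OF a]] by auto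
  have ik: "integrable lborel k" using hk(1) unfolding k_def set_integrable_def .
  have Ik: "integral\<^sup>L lborel k = Gamma a" using hk(2) unfolding k_def set_lebesgue_integral_def .
  have D: "th powr a * Gamma a > 0" using a th by simp
  have Gne: "Gamma a \<noteq> 0" using Gamma_real_pos[OF a] by linarith
  have eq: "indicator {0..} x *\<^sub>R gamma_density a th x = (1 / (th * Gamma a)) * k (0 + (1 / th) * x)" for x
  proof (cases "x > 0")
    case True
    define p where "p = th powr (a - 1)"
    have p: "p > 0" unfolding p_def using th by simp
    have 1: "(x / th) powr (a - 1) = x powr (a - 1) / p" unfolding p_def by (rule powr_divide)
    have 2: "th powr a = th * p" unfolding p_def using th by (simp add: powr_diff)
    have 3: "exp (- (x / th)) = 1 / exp (x / th)" by (simp add: exp_minus field_simps)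
    have G: "Gamma a > 0" using a by simp
    have "indicator {0..} x *\<^sub>R gamma_density a th x = x powr (a - 1) * (1 / exp (x / th)) / ((th * p) * Gamma a)"
      using True by (simp add: gamma_density_def 2 3)
    also have "\<dots> = (1 / (th * Gamma a)) * ((x powr (a - 1) / p) / exp (x / th))"
      using p th G by (simp add: field_simps)
    also have "\<dots> = (1 / (th * Gamma a)) * k (0 + (1 / th) * x)"
      using True th by (simp add: k_def 1)
    finally show ?thesis .
  next
    case False
    then show ?thesis using th by (cases "x = 0") (auto simp: k_def gamma_density_def indicator_def zero_le_divide_iff)
  qed
  have i2: "integrable lborel (\<lambda>x. k (0 + (1 / th) * x))"
    by (rule lborel_integrable_real_affine[OF ik]) (use th in simp)
  have "integral\<^sup>L lborel k = \<bar>1 / th\<bar> *\<^sub>R integral\<^sup>L lborel (\<lambda>x. k (0 + (1 / th) * x))"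
    by (rule lborel_integral_real_affine) (use th in simp)
  then have I2: "integral\<^sup>L lborel (\<lambda>x. k (0 + (1 / th) * x)) = th * Gamma a"
    using Ik th by (simp add: field_simps)
  show "set_integrable lborel {0..} (gamma_density a th)"
    unfolding set_integrable_def eq using i2 by (rule integrable_mult_right)
  show "(LINT t:{0..}|lborel. gamma_density a th t) = 1"
    unfolding set_lebesgue_integral_def eq using I2 th a Gne by simp
qed

lemma gamma_bound:
  assumes a: "a > 0" and th: "th > 0"
  shows "\<exists>C \<beta>. 0 < \<beta> \<and> (\<forall>t\<ge>1. gamma_density a th t \<le> C * exp (- \<beta> * t))"
proof -
  define n where "n = Suc (nat \<lceil>a\<rceil>)"
  have n: "real n \<ge> a - 1" "n \<ge> 1" unfolding n_def using real_nat_ceiling_ge[of a] by auto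
  define D where "D = th powr a * Gamma a"
  have D: "D > 0" unfolding D_def using a th by simp
  define C where "C = (2 * n * th) ^ n / D"
  show ?thesis
  proof (intro exI conjI allI impI)
    show "0 < 1 / (2 * th)" using th by simp
    fix t :: real assume t: "t \<ge> 1"
    have "t powr (a - 1) \<le> t powr real n" using t n by (intro powr_mono) auto
    also have "\<dots> = t ^ n" using t by (simp add: powr_realpow)
    also have "\<dots> = (2 * n * th) ^ n * (t / (2 * n * th)) ^ n"
      using th n by (simp add: power_divide)
    also have "\<dots> \<le> (2 * n * th) ^ n * exp (t / (2 * n * th)) ^ n"
    proof (intro mult_left_mono power_mono)
      have "t / (2 * n * th) \<le> 1 + t / (2 * n * th)" by simp
      also have "\<dots> \<le> exp (t / (2 * n * th))" by (rule exp_ge_add_one_self)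
      finally show "t / (2 * n * th) \<le> exp (t / (2 * n * th))" .
    qed (use t th n in auto)
    also have "exp (t / (2 * n * th)) ^ n = exp (t / (2 * th))"
      using n th by (simp flip: exp_of_nat_mult)
    finally have bnd: "t powr (a - 1) \<le> (2 * n * th) ^ n * exp (t / (2 * th))" .
    have "gamma_density a th t = t powr (a - 1) * exp (- t / th) / D"
      using t by (simp add: gamma_density_def D_def)
    also have "\<dots> \<le> (2 * n * th) ^ n * exp (t / (2 * th)) * exp (- t / th) / D"
      using bnd D by (intro divide_right_mono mult_right_mono) auto
    also have "\<dots> = C * exp (- (1 / (2 * th)) * t)"
      unfolding C_def using th D
      by (simp add: field_simps flip: exp_add)
    finally show "gamma_density a th t \<le> C * exp (- (1 / (2 * th)) * t)" .
  qed
qed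

lemma gamma_ratio_core:
  assumes a: "a > 0" and th: "th > 0" and x: "0 < x" and xy: "x \<le> y" and u: "0 \<le> u"
  shows "\<exists>c>0. gamma_density a th x * gamma_density a th (y + u) = (x * (y + u)) powr (a - 1) * c
     \<and> gamma_density a th y * gamma_density a th (x + u) = (y * (x + u)) powr (a - 1) * c"
proof -
  define D where "D = th powr a * Gamma a"
  have D: "D > 0" unfolding D_def using a th by simp
  define E where "E z = exp (- z / th)" for z
  have Q: "E x * E (y + u) = E y * E (x + u)" unfolding E_def
    using th by (simp flip: exp_add add: field_simps)
  have Qp: "E x * E (y + u) > 0" unfolding E_def by simp
  have pos: "y > 0" "y + u > 0" "x + u > 0" using x xy u by auto
  have "gamma_density a th x * gamma_density a th (y + u) = (x * (y + u)) powr (a - 1) * ((E x * E (y + u)) / D^2)"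
    using x pos by (simp add: gamma_density_def D_def E_def powr_mult power2_eq_square)
  moreover have "gamma_density a th y * gamma_density a th (x + u) = (y * (x + u)) powr (a - 1) * ((E x * E (y + u)) / D^2)"
    using x pos Q by (simp add: gamma_density_def D_def E_def powr_mult power2_eq_square)
  moreover have "(E x * E (y + u)) / D^2 > 0" using Qp D by simp
  ultimately show ?thesis by blast
qed

lemma gamma_ratioI:
  assumes a: "a \<ge> 1" and th: "th > 0"
  shows "ratioI (gamma_density a th)"
  unfolding ratioI_def
proof (intro allI impI)
  fix x y u :: real assume x: "0 < x" and xy: "x \<le> y" and u: "0 \<le> u"
  obtain c where c: "c > 0" "gamma_density a th x * gamma_density a th (y + u) = (x * (y + u)) powr (a - 1) * c"
     "gamma_density a th y * gamma_density a th (x + u) = (y * (x + u)) powr (a - 1) * c"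
    using gamma_ratio_core[of a th x y u] a th x xy u by auto
  have "(x * (y + u)) powr (a - 1) \<le> (y * (x + u)) powr (a - 1)"
    using a x xy u by (intro powr_mono2) (auto simp: algebra_simps intro: mult_left_mono)
  then show "gamma_density a th x * gamma_density a th (y + u) \<le> gamma_density a th y * gamma_density a th (x + u)"
    unfolding c(2,3) using c(1) by (simp add: mult_right_mono)
qed

lemma gamma_ratioD:
  assumes a0: "a > 0" and a: "a \<le> 1" and th: "th > 0"
  shows "ratioD (gamma_density a th)"
  unfolding ratioD_def
proof (intro allI impI)
  fix x y u :: real assume x: "0 < x" and xy: "x \<le> y" and u: "0 \<le> u"
  obtain c where c: "c > 0" "gamma_density a th x * gamma_density a th (y + u) = (x * (y + u)) powr (a - 1) * c"
     "gamma_density a th y * gamma_density a th (x + u) = (y * (x + u)) powr (a - 1) * c"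
    using gamma_ratio_core[of a th x y u] a0 th x xy u by auto
  have le: "x * (y + u) \<le> y * (x + u)" using x xy u by (auto simp: algebra_simps intro: mult_left_mono)
  have p: "x * (y + u) > 0" using x xy u by simp
  have "(y * (x + u)) powr (a - 1) \<le> (x * (y + u)) powr (a - 1)"
    using powr_mono2'[of "a - 1", OF _ p le] a by simp
  then show "gamma_density a th y * gamma_density a th (x + u) \<le> gamma_density a th x * gamma_density a th (y + u)"
    unfolding c(2,3) using c(1) by (simp add: mult_right_mono)
qed

lemma gamma_basic:
  assumes a: "a > 0" and th: "th > 0"
  shows "basic (gamma_density a th)"
  unfolding basic_def using gamma_meas gamma_nn[OF a th] gamma_pos[OF a th] gamma_cont[OF a th]
    gamma_integral(1)[OF a th] gamma_bound[OF a th] by blast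

lemma sTbar_Suc_eq:
  assumes "(LINT t:{0..}|lborel. f t) = 1"
  shows "sTbar f (Suc n) = nextT (sTbar f n)"
proof (cases n)
  case 0
  have e: "sTbar f 0 = f" by (rule ext) simp
  show ?thesis using assms 0 by (auto simp: nextT_def fun_eq_iff e)
next
  case (Suc m)
  then show ?thesis by (auto simp: nextT_def fun_eq_iff)
qed

lemma chain_IFR:
  assumes "basic f" "ratioI f" "(LINT t:{0..}|lborel. f t) = 1"
  shows "basic (sTbar f n) \<and> ratioI (sTbar f n)"
proof (induction n)
  case 0 then show ?case using assms by (simp add: fun_eq_iff[symmetric] eta_contract_eq)
next
  case (Suc n)
  then show ?case unfolding sTbar_Suc_eq[OF assms(3)]
    using level_basic(1) level_IFR(2) by blast
qed

lemma chain_DFR: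
  assumes "basic f" "ratioD f" "(LINT t:{0..}|lborel. f t) = 1"
  shows "basic (sTbar f n) \<and> ratioD (sTbar f n)"
proof (induction n)
  case 0 then show ?case using assms by (simp add: fun_eq_iff[symmetric] eta_contract_eq)
next
  case (Suc n)
  then show ?case unfolding sTbar_Suc_eq[OF assms(3)]
    using level_basic(1) level_DFR(2) by blast
qed

theorem proposition2:
  fixes s :: nat and \<alpha>' \<alpha> \<theta>1 \<theta>2 :: real
  assumes "s \<ge> 1" and "\<alpha>' > 1" and "1 > \<alpha>" and "\<alpha> > 0"
    and "\<theta>1 > 0" and "\<theta>2 > 0"
  shows "more_s_IFR s (gamma_density \<alpha>' \<theta>1) (gamma_density \<alpha> \<theta>2)"
proof -
  obtain n where s: "s = Suc n" using assms(1) by (cases s) auto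
  define f where "f = gamma_density \<alpha>' \<theta>1"
  define g where "g = gamma_density \<alpha> \<theta>2"
  have a1: "\<alpha>' > 0" using assms by simp
  have fi: "(LINT t:{0..}|lborel. f t) = 1" unfolding f_def by (rule gamma_integral(2)[OF a1 assms(5)])
  have gi: "(LINT t:{0..}|lborel. g t) = 1" unfolding g_def by (rule gamma_integral(2)[OF assms(4,6)])
  have cf: "basic (sTbar f n) \<and> ratioI (sTbar f n)"
    by (rule chain_IFR) (use fi gamma_basic[OF a1 assms(5)] gamma_ratioI[of \<alpha>' \<theta>1] assms in \<open>auto simp: f_def\<close>)
  have cg: "basic (sTbar g n) \<and> ratioD (sTbar g n)"
    by (rule chain_DFR) (use gi gamma_basic[OF assms(4,6)] gamma_ratioD[of \<alpha> \<theta>2] assms in \<open>auto simp: g_def\<close>)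
  define TX where "TX = nextT (sTbar f n)"
  define TY where "TY = nextT (sTbar g n)"
  have X: "sTbar f s = TX" unfolding s TX_def by (rule sTbar_Suc_eq[OF fi])
  have Y: "sTbar g s = TY" unfolding s TY_def by (rule sTbar_Suc_eq[OF gi])
  note LX = level_basic[OF conjunct1[OF cf], folded TX_def]
  note LY = level_basic[OF conjunct1[OF cg], folded TY_def]
  have "convex_on {0..} (\<lambda>x. inv_into {0..} TY (TX x))"
  proof (rule final_convex)
    show "\<And>x. 0 \<le> x \<Longrightarrow> 0 < TX x" using LX(6) by blast
    show "\<And>x. 0 \<le> x \<Longrightarrow> TX x \<le> 1" using LX(7) by blast
    show "concave_on {0..} (\<lambda>x. ln (TX x))" unfolding TX_def using level_IFR(1) cf by blast
    show "continuous_on {0..} TY" by (rule LY(2))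
    show "TY 0 = 1" by (rule LY(3))
    show "\<And>x y. 0 \<le> x \<Longrightarrow> x < y \<Longrightarrow> TY y < TY x" by (rule LY(4))
    show "(TY \<longlongrightarrow> 0) at_top" by (rule LY(5))
    show "\<And>x. 0 \<le> x \<Longrightarrow> 0 < TY x" using LY(6) by blast
    show "convex_on {0..} (\<lambda>x. ln (TY x))" unfolding TY_def using level_DFR(1) cg by blast
  qed
  then show ?thesis unfolding more_s_IFR_def f_def[symmetric] g_def[symmetric] X Y .
qed

end
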